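(* Let $f:\Sigma^*\to\Sigma^*$ be a sequential transduction. Then $f$ is $\mathcal{A}p$-sequential if and only if $f$ is $\mathcal{A}p$-rational.
   Context: A congruence $\sim$ on $\Sigma^*$ is aperiodic if there is $n$ with $w^n\sim w^{n+1}$ for all words $w$; $\mathcal{A}p(\Sigma)$ is the set of aperiodic congruences of finite index. For an automaton $\mathcal A=(Q,\Delta,I,F)$, its transition congruence is $u\approx_{\mathcal A}v$ iff for all $p,q\in Q$, there is a run on $u$ from $p$ to $q$ iff there is one on $v$; $\mathcal A$ is aperiodic if $\approx_{\mathcal A}$ is aperiodic. A transducer $\mathcal T=(\mathcal A,o,i,t)$ consists of an automaton $\mathcal A$, outputs $o:\Delta\to\Sigma^*$, initial outputs $i:I\to\Sigma^*$ and final outputs $t:F\to\Sigma^*$, realizing the pairs $(u,i(q_0)\,o(\text{run})\,t(q_n))$ for accepting runs on $u$; it is functional if this relation is a partial function and sequential if $\mathcal A$ is deterministic. A transduction is sequential if realized by a sequential transducer, $\mathcal{A}p$-rational if realized by a functional transducer with aperiodic underlying automaton, and $\mathcal{A}p$-sequential if realized by a sequential transducer with aperiodic underlying automaton. *)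

theory Defs
  imports Main
begin

text \<open>Words over the alphabet 'a are lists. States of automata are natural numbers
(every finite state set can be renamed into nat).\<close>

definition wpow :: "'a list \<Rightarrow> nat \<Rightarrow> 'a list" where
  "wpow w n = concat (replicate n w)"

definition aperiodic_rel :: "('a list \<Rightarrow> 'a list \<Rightarrow> bool) \<Rightarrow> bool" where
  "aperiodic_rel R \<longleftrightarrow> (\<exists>n. \<forall>w. R (wpow w n) (wpow w (Suc n)))"

record 'a automaton =
  states :: "nat set"
  trans  :: "(nat \<times> 'a \<times> nat) set"
  init   :: "nat set"
  final  :: "nat set"

definition wf_aut :: "'a automaton \<Rightarrow> bool" where
  "wf_aut A \<longleftrightarrow> finite (states A) \<and> trans A \<subseteq> states A \<times> UNIV \<times> states A
     \<and> init A \<subseteq> states A \<and> final A \<subseteq> states A"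

inductive is_run :: "'a automaton \<Rightarrow> nat \<Rightarrow> (nat \<times> 'a \<times> nat) list \<Rightarrow> nat \<Rightarrow> bool"
  for A where
  run_nil: "is_run A p [] p"
| run_cons: "(p, a, q) \<in> trans A \<Longrightarrow> is_run A q ts r \<Longrightarrow> is_run A p ((p, a, q) # ts) r"

definition run_label :: "(nat \<times> 'a \<times> nat) list \<Rightarrow> 'a list" where
  "run_label ts = map (\<lambda>(p, a, q). a) ts"

definition trans_cong :: "'a automaton \<Rightarrow> 'a list \<Rightarrow> 'a list \<Rightarrow> bool" where
  "trans_cong A u v \<longleftrightarrow> (\<forall>p\<in>states A. \<forall>q\<in>states A.
      (\<exists>ts. is_run A p ts q \<and> run_label ts = u) \<longleftrightarrow> (\<exists>ts. is_run A p ts q \<and> run_label ts = v))"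

definition aperiodic_aut :: "'a automaton \<Rightarrow> bool" where
  "aperiodic_aut A \<longleftrightarrow> aperiodic_rel (trans_cong A)"

definition deterministic :: "'a automaton \<Rightarrow> bool" where
  "deterministic A \<longleftrightarrow> (\<forall>p q. p \<in> init A \<longrightarrow> q \<in> init A \<longrightarrow> p = q)
     \<and> (\<forall>p a q q'. (p, a, q) \<in> trans A \<longrightarrow> (p, a, q') \<in> trans A \<longrightarrow> q = q')"

record 'a transducer =
  aut  :: "'a automaton"
  out  :: "nat \<times> 'a \<times> nat \<Rightarrow> 'a list"
  iout :: "nat \<Rightarrow> 'a list"
  tout :: "nat \<Rightarrow> 'a list"

definition realized_rel :: "'a transducer \<Rightarrow> ('a list \<times> 'a list) set" where
  "realized_rel T = {(run_label ts, iout T q0 @ concat (map (out T) ts) @ tout T qn) | q0 ts qn.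
      q0 \<in> init (aut T) \<and> qn \<in> final (aut T) \<and> is_run (aut T) q0 ts qn}"

definition functional :: "'a transducer \<Rightarrow> bool" where
  "functional T \<longleftrightarrow> (\<forall>u v v'. (u, v) \<in> realized_rel T \<longrightarrow> (u, v') \<in> realized_rel T \<longrightarrow> v = v')"

definition realizes :: "'a transducer \<Rightarrow> ('a list \<Rightarrow> 'a list option) \<Rightarrow> bool" where
  "realizes T f \<longleftrightarrow> (\<forall>u v. (u, v) \<in> realized_rel T \<longleftrightarrow> f u = Some v)"

definition sequential_transduction :: "('a list \<Rightarrow> 'a list option) \<Rightarrow> bool" where
  "sequential_transduction f \<longleftrightarrow>
     (\<exists>T. wf_aut (aut T) \<and> deterministic (aut T) \<and> realizes T f)"

definition Ap_rational :: "('a list \<Rightarrow> 'a list option) \<Rightarrow> bool" where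
  "Ap_rational f \<longleftrightarrow>
     (\<exists>T. wf_aut (aut T) \<and> functional T \<and> aperiodic_aut (aut T) \<and> realizes T f)"

definition Ap_sequential :: "('a list \<Rightarrow> 'a list option) \<Rightarrow> bool" where
  "Ap_sequential f \<longleftrightarrow>
     (\<exists>T. wf_aut (aut T) \<and> deterministic (aut T) \<and> aperiodic_aut (aut T) \<and> realizes T f)"

end

theory Submission
  imports Defs "HOL-Library.Sublist"
begin


abbreviation LCP where "LCP \<equiv> Longest_common_prefix"

lemma LCP_append_image:
  assumes "Y \<noteq> {}" shows "LCP ((@) c ` Y) = c @ LCP Y"
  using assms
proof (induction c)
  case Nil then show ?case by simp
next
  case (Cons a c)
  have "(@) (a # c) ` Y = (#) a ` ((@) c ` Y)" by auto
  then show ?case using Cons Longest_common_prefix_image_Cons[of "(@) c ` Y" a] by auto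
qed

definition ranv :: "('b \<Rightarrow> 'c option) \<Rightarrow> 'c set" where
  "ranv H = {y. \<exists>v. H v = Some y}"

definition Om :: "('a list \<Rightarrow> 'a list option) \<Rightarrow> 'a list \<Rightarrow> 'a list" where
  "Om g w = LCP (ranv (\<lambda>v. g (w @ v)))"

definition stp :: "('a list \<Rightarrow> 'a list option) \<Rightarrow> 'a list \<Rightarrow> ('a list \<Rightarrow> 'a list option)" where
  "stp g w = (\<lambda>v. map_option (drop (length (Om g w))) (g (w @ v)))"

definition Pref :: "('a list \<Rightarrow> 'a list option) \<Rightarrow> 'a list \<Rightarrow> bool" where
  "Pref f u \<longleftrightarrow> (\<exists>v. f (u @ v) \<noteq> None)"

definition Lf :: "('a list \<Rightarrow> 'a list option) \<Rightarrow> 'a list \<Rightarrow> 'a list" where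
  "Lf f u = LCP (ranv (\<lambda>v. f (u @ v)))"

definition res :: "('a list \<Rightarrow> 'a list option) \<Rightarrow> 'a list \<Rightarrow> ('a list \<Rightarrow> 'a list option)" where
  "res f u = (\<lambda>v. map_option (drop (length (Lf f u))) (f (u @ v)))"

lemma res_eq_stp: "res f u = stp f u"
  by (simp add: res_def stp_def Lf_def Om_def)

lemma LCP_split:
  assumes "y \<in> ranv H" shows "y = LCP (ranv H) @ drop (length (LCP (ranv H))) y"
proof -
  have "prefix (LCP (ranv H)) y" using assms Longest_common_prefix_prefix by blast
  then show ?thesis by (metis append_take_drop_id prefix_def take_append append_eq_conv_conj)
qed

lemma stp_split: "g (w @ v) = map_option ((@) (Om g w)) (stp g w v)"
proof (cases "g (w @ v)")
  case None then show ?thesis by (simp add: stp_def)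
next
  case (Some y)
  then have "y \<in> ranv (\<lambda>v. g (w @ v))" by (auto simp: ranv_def)
  from LCP_split[OF this] Some show ?thesis by (simp add: stp_def Om_def)
qed

lemma F1: "f (u @ v) = map_option ((@) (Lf f u)) (res f u v)"
  using stp_split[of f u v] by (simp add: res_eq_stp Lf_def Om_def)

lemma res_generic:
  assumes "\<And>v. f (u @ v) = map_option ((@) c) (H v)"
  shows "res f u = (\<lambda>v. map_option (drop (length (LCP (ranv H)))) (H v))"
    and "ranv H \<noteq> {} \<Longrightarrow> Lf f u = c @ LCP (ranv H)"
proof -
  have R: "ranv (\<lambda>v. f (u @ v)) = (@) c ` ranv H"
    using assms by (auto simp: ranv_def)
  show L: "ranv H \<noteq> {} \<Longrightarrow> Lf f u = c @ LCP (ranv H)"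
    unfolding Lf_def R by (rule LCP_append_image)
  show "res f u = (\<lambda>v. map_option (drop (length (LCP (ranv H)))) (H v))"
  proof
    fix v
    show "res f u v = map_option (drop (length (LCP (ranv H)))) (H v)"
    proof (cases "H v")
      case None then show ?thesis by (simp add: res_def assms)
    next
      case (Some y)
      then have "ranv H \<noteq> {}" by (auto simp: ranv_def)
      with L Some show ?thesis by (simp add: res_def assms)
    qed
  qed
qed

lemma res_append: "res f (u @ w) = stp (res f u) w"
proof -
  have "\<And>v. f ((u @ w) @ v) = map_option ((@) (Lf f u)) (res f u (w @ v))"
    using F1[of f u] by simp
  from res_generic(1)[of f "u @ w" "Lf f u" "\<lambda>v. res f u (w @ v)", OF this] show ?thesis by (simp add: stp_def Om_def)
qed

lemma Lf_append:
  assumes "Pref f (u @ w)" shows "Lf f (u @ w) = Lf f u @ Om (res f u) w"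
proof -
  have E: "\<And>v. f ((u @ w) @ v) = map_option ((@) (Lf f u)) (res f u (w @ v))"
    using F1[of f u] by simp
  have "ranv (\<lambda>v. res f u (w @ v)) \<noteq> {}"
    using assms E unfolding Pref_def ranv_def by (metis (mono_tags) empty_Collect_eq option.map_disc_iff option.exhaust_sel)
  from res_generic(2)[of f "u @ w" "Lf f u" "\<lambda>v. res f u (w @ v)", OF E this] show ?thesis by (simp add: Om_def)
qed

lemma Pref_res: "Pref f u \<longleftrightarrow> res f u \<noteq> (\<lambda>_. None)"
  by (auto simp: Pref_def res_def fun_eq_iff)

lemma Om_Nil_res: assumes "Pref f u" shows "Om (res f u) [] = []"
  using Lf_append[of f u "[]"] assms by simp

lemma Pref_prefix: "Pref f (u @ w) \<Longrightarrow> Pref f u"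
  unfolding Pref_def by (metis append.assoc)


lemma is_run_append:
  "is_run A p (ts1 @ ts2) r \<longleftrightarrow> (\<exists>q. is_run A p ts1 q \<and> is_run A q ts2 r)"
proof (induction ts1 arbitrary: p)
  case Nil then show ?case by (auto intro: is_run.intros elim: is_run.cases)
next
  case (Cons t ts1)
  obtain p1 a q1 where t: "t = (p1, a, q1)" by (cases t) auto
  show ?case
  proof
    assume "is_run A p ((t # ts1) @ ts2) r"
    then have "p1 = p" "(p, a, q1) \<in> trans A" "is_run A q1 (ts1 @ ts2) r"
      by (auto simp: t elim: is_run.cases)
    then show "\<exists>q. is_run A p (t # ts1) q \<and> is_run A q ts2 r"
      using Cons.IH by (auto simp: t intro: is_run.intros)
  next
    assume "\<exists>q. is_run A p (t # ts1) q \<and> is_run A q ts2 r"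
    then obtain q where "is_run A p (t # ts1) q" "is_run A q ts2 r" by blast
    then have "p1 = p" "(p, a, q1) \<in> trans A" "is_run A q1 ts1 q"
      by (auto simp: t elim: is_run.cases)
    then show "is_run A p ((t # ts1) @ ts2) r"
      using Cons.IH \<open>is_run A q ts2 r\<close> by (auto simp: t intro: is_run.intros)
  qed
qed

lemma is_run_Nil_iff: "is_run A p [] q \<longleftrightarrow> p = q"
  by (auto intro: is_run.intros elim: is_run.cases)

lemma is_run_Cons_iff: "is_run A p (t # ts) r \<longleftrightarrow> (\<exists>a q. t = (p, a, q) \<and> t \<in> trans A \<and> is_run A q ts r)"
  by (auto intro: is_run.intros elim: is_run.cases)

lemma run_label_append[simp]: "run_label (ts1 @ ts2) = run_label ts1 @ run_label ts2"
  by (simp add: run_label_def)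

lemma run_label_Nil[simp]: "run_label [] = []" by (simp add: run_label_def)
lemma run_label_Cons[simp]: "run_label ((p, a, q) # ts) = a # run_label ts" by (simp add: run_label_def)
lemma length_run_label[simp]: "length (run_label ts) = length ts" by (simp add: run_label_def)
lemma run_label_take: "run_label (take k ts) = take k (run_label ts)" by (simp add: run_label_def take_map)
lemma run_label_drop: "run_label (drop k ts) = drop k (run_label ts)" by (simp add: run_label_def drop_map)

lemma is_run_states:
  assumes "wf_aut A" "is_run A p ts q" "p \<in> states A" shows "q \<in> states A"
  using assms(2,3)
proof (induction rule: is_run.induct)
  case (run_cons p a q ts r) then show ?case using assms(1) by (auto simp: wf_aut_def)
qed simp

lemma is_run_trans: "is_run A p ts q \<Longrightarrow> set ts \<subseteq> trans A"
  by (induction rule: is_run.induct) auto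

lemma is_run_split_label:
  assumes "is_run A p ts r" "run_label ts = u @ w"
  shows "\<exists>ts1 ts2 q. ts = ts1 @ ts2 \<and> run_label ts1 = u \<and> run_label ts2 = w \<and> is_run A p ts1 q \<and> is_run A q ts2 r"
proof -
  let ?k = "length u"
  have "ts = take ?k ts @ drop ?k ts" by simp
  moreover have "run_label (take ?k ts) = u" "run_label (drop ?k ts) = w"
    using assms(2) by (simp_all add: run_label_take run_label_drop)
  moreover obtain q where "is_run A p (take ?k ts) q" "is_run A q (drop ?k ts) r"
    using assms(1) is_run_append[of A p "take ?k ts" "drop ?k ts" r] by auto
  ultimately show ?thesis by blast
qed

definition Rel where "Rel A p w q \<longleftrightarrow> (\<exists>ts. is_run A p ts q \<and> run_label ts = w)"

lemma Rel_append: "Rel A p (u @ w) r \<longleftrightarrow> (\<exists>q. Rel A p u q \<and> Rel A q w r)"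
proof
  assume "Rel A p (u @ w) r"
  then show "\<exists>q. Rel A p u q \<and> Rel A q w r"
    unfolding Rel_def using is_run_split_label by metis
next
  assume "\<exists>q. Rel A p u q \<and> Rel A q w r"
  then show "Rel A p (u @ w) r"
    unfolding Rel_def by (metis is_run_append run_label_append)
qed

lemma det_run_unique:
  assumes "deterministic A" "is_run A p ts q" "is_run A p ts' q'" "run_label ts = run_label ts'"
  shows "ts = ts' \<and> q = q'"
  using assms(2-4)
proof (induction arbitrary: ts' rule: is_run.induct)
  case (run_nil p) then show ?case by (cases ts') (auto elim: is_run.cases)
next
  case (run_cons p a q ts r)
  from run_cons.prems obtain q2 ts2 where ts': "ts' = (p, a, q2) # ts2" "(p, a, q2) \<in> trans A" "is_run A q2 ts2 q'"
    by (cases ts') (auto simp: is_run_Cons_iff)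
  with run_cons.hyps(1) assms(1) have "q2 = q" by (auto simp: deterministic_def)
  with run_cons.IH[of ts2] ts' run_cons.prems show ?case by auto
qed

definition Res where "Res f = res f ` {u. Pref f u}"

definition Outp where "Outp T ts = concat (map (out T) ts)"

lemma Outp_append[simp]: "Outp T (ts1 @ ts2) = Outp T ts1 @ Outp T ts2"
  by (simp add: Outp_def)

definition PH where "PH T s v ot \<longleftrightarrow> (\<exists>ts qf. is_run (aut T) s ts qf \<and> run_label ts = v \<and> qf \<in> final (aut T) \<and> ot = Outp T ts @ tout T qf)"

definition Hs where "Hs T s v = (if \<exists>ot. PH T s v ot then Some (SOME ot. PH T s v ot) else None)"

lemma PH_unique: "deterministic (aut T) \<Longrightarrow> PH T s v ot \<Longrightarrow> PH T s v ot' \<Longrightarrow> ot = ot'"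
  unfolding PH_def using det_run_unique by metis

lemma Hs_Some: "deterministic (aut T) \<Longrightarrow> Hs T s v = Some ot \<longleftrightarrow> PH T s v ot"
  unfolding Hs_def by (metis (mono_tags, lifting) PH_unique option.inject option.simps(3) someI)

lemma realized_rel_iff:
  "(w, y) \<in> realized_rel T \<longleftrightarrow> (\<exists>q0 ts qn. q0 \<in> init (aut T) \<and> qn \<in> final (aut T) \<and> is_run (aut T) q0 ts qn \<and> run_label ts = w \<and> y = iout T q0 @ Outp T ts @ tout T qn)"
  unfolding realized_rel_def Outp_def by blast

lemma seq_res_state:
  assumes det: "deterministic (aut T)" and rz: "realizes T f"
    and q0: "q0 \<in> init (aut T)" and run: "is_run (aut T) q0 ts s" and lab: "run_label ts = u"
  shows "f (u @ v) = map_option ((@) (iout T q0 @ Outp T ts)) (Hs T s v)"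
proof (cases "Hs T s v")
  case None
  show ?thesis
  proof (cases "f (u @ v)")
    case (Some y)
    then have "(u @ v, y) \<in> realized_rel T" using rz by (simp add: realizes_def)
    then obtain q0' ts' qn where A: "q0' \<in> init (aut T)" "qn \<in> final (aut T)" "is_run (aut T) q0' ts' qn"
      "run_label ts' = u @ v" "y = iout T q0' @ Outp T ts' @ tout T qn"
      unfolding realized_rel_iff by blast
    have "q0' = q0" using det A(1) q0 by (auto simp: deterministic_def)
    obtain ts1 ts2 q where B: "ts' = ts1 @ ts2" "run_label ts1 = u" "run_label ts2 = v" "is_run (aut T) q0 ts1 q" "is_run (aut T) q ts2 qn"
      using is_run_split_label[OF A(3)[unfolded \<open>q0' = q0\<close>] A(4)] by blast
    have "ts1 = ts \<and> q = s" using det_run_unique[OF det B(4) run] B(2) lab by simp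
    then have "PH T s v (Outp T ts2 @ tout T qn)" using B A unfolding PH_def by blast
    then show ?thesis using None Hs_Some[OF det] by (metis option.distinct(1))
  qed (simp add: None)
next
  case (Some ot)
  then have "PH T s v ot" using Hs_Some[OF det] by blast
  then obtain ts2 qf where C: "is_run (aut T) s ts2 qf" "run_label ts2 = v" "qf \<in> final (aut T)" "ot = Outp T ts2 @ tout T qf"
    unfolding PH_def by blast
  have "is_run (aut T) q0 (ts @ ts2) qf" using run C(1) is_run_append by blast
  then have "(u @ v, iout T q0 @ Outp T (ts @ ts2) @ tout T qf) \<in> realized_rel T"
    unfolding realized_rel_iff using q0 C lab by fastforce
  then show ?thesis using rz Some C(4) by (simp add: realizes_def)
qed

lemma finite_Res:
  assumes "sequential_transduction f" shows "finite (Res f)"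
proof -
  obtain T where T: "wf_aut (aut T)" "deterministic (aut T)" "realizes T f"
    using assms by (auto simp: sequential_transduction_def)
  define G where "G s = (\<lambda>v. map_option (drop (length (LCP (ranv (Hs T s))))) (Hs T s v))" for s
  have "Res f \<subseteq> G ` states (aut T)"
  proof
    fix g assume "g \<in> Res f"
    then obtain u where u: "Pref f u" "g = res f u" by (auto simp: Res_def)
    then obtain v y where "f (u @ v) = Some y" by (auto simp: Pref_def)
    then have "(u @ v, y) \<in> realized_rel T" using T(3) by (simp add: realizes_def)
    then obtain q0 ts' qn where A: "q0 \<in> init (aut T)" "is_run (aut T) q0 ts' qn" "run_label ts' = u @ v"
      unfolding realized_rel_iff by blast
    obtain ts1 ts2 s where B: "run_label ts1 = u" "is_run (aut T) q0 ts1 s"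
      using is_run_split_label[OF A(2,3)] by blast
    have "s \<in> states (aut T)" using is_run_states[OF T(1) B(2)] A(1) T(1) by (auto simp: wf_aut_def)
    moreover have "res f u = G s"
      using res_generic(1)[of f u "iout T q0 @ Outp T ts1" "Hs T s"] seq_res_state[OF T(2,3) A(1) B(2,1)]
      by (simp add: G_def)
    ultimately show "g \<in> G ` states (aut T)" using u by auto
  qed
  moreover have "finite (states (aut T))" using T(1) by (simp add: wf_aut_def)
  ultimately show ?thesis using finite_subset by blast
qed


definition can_aut :: "('a list \<Rightarrow> 'a list option) \<Rightarrow> (('a list \<Rightarrow> 'a list option) \<Rightarrow> nat) \<Rightarrow> 'a automaton" where
  "can_aut f enc = \<lparr>states = enc ` Res f,
     trans = {(enc (res f u), a, enc (res f (u @ [a]))) | u a. Pref f (u @ [a])},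
     init = (if Pref f [] then {enc (res f [])} else {}),
     final = {enc (res f u) | u. Pref f u \<and> f u \<noteq> None}\<rparr>"

definition can :: "('a list \<Rightarrow> 'a list option) \<Rightarrow> (('a list \<Rightarrow> 'a list option) \<Rightarrow> nat) \<Rightarrow> 'a transducer" where
  "can f enc = \<lparr>aut = can_aut f enc,
     out = (\<lambda>(p, a, q). (SOME ot. \<exists>u. p = enc (res f u) \<and> Pref f (u @ [a]) \<and> ot = Om (res f u) [a])),
     iout = (\<lambda>q. Lf f []),
     tout = (\<lambda>q. (SOME ot. \<exists>u. q = enc (res f u) \<and> Pref f u \<and> res f u [] = Some ot))\<rparr>"

context
  fixes f :: "'a list \<Rightarrow> 'a list option" and enc :: "('a list \<Rightarrow> 'a list option) \<Rightarrow> nat"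
  assumes inj: "inj_on enc (Res f)"
begin

lemma enc_eq: "Pref f u \<Longrightarrow> Pref f u' \<Longrightarrow> enc (res f u) = enc (res f u') \<Longrightarrow> res f u = res f u'"
  using inj unfolding inj_on_def Res_def by blast

lemma res_snoc_eq: "res f u = res f u' \<Longrightarrow> res f (u @ w) = res f (u' @ w)"
  by (simp add: res_append)

lemma out_val:
  assumes "Pref f (u @ [a])" shows "out (can f enc) (enc (res f u), a, q) = Om (res f u) [a]"
proof -
  let ?P = "\<lambda>ot. \<exists>u'. enc (res f u) = enc (res f u') \<and> Pref f (u' @ [a]) \<and> ot = Om (res f u') [a]"
  have "?P (Om (res f u) [a])" using assms by blast
  then have "?P (SOME ot. ?P ot)" by (rule someI)
  then obtain u' where "enc (res f u) = enc (res f u')" "Pref f (u' @ [a])" "(SOME ot. ?P ot) = Om (res f u') [a]" by blast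
  moreover have "res f u = res f u'" using enc_eq Pref_prefix assms calculation by metis
  ultimately show ?thesis by (simp add: can_def)
qed

lemma tout_val:
  assumes "Pref f u" "res f u [] = Some ot" shows "tout (can f enc) (enc (res f u)) = ot"
proof -
  let ?P = "\<lambda>ot. \<exists>u'. enc (res f u) = enc (res f u') \<and> Pref f u' \<and> res f u' [] = Some ot"
  have "?P ot" using assms by blast
  then have "?P (SOME ot. ?P ot)" by (rule someI)
  then obtain u' where "enc (res f u) = enc (res f u')" "Pref f u'" "res f u' [] = Some (SOME ot. ?P ot)" by blast
  moreover have "res f u = res f u'" using enc_eq assms calculation by metis
  ultimately show ?thesis using assms by (simp add: can_def)
qed

lemma Om_append:
  assumes "Pref f (u @ w @ w')"
  shows "Om (res f u) (w @ w') = Om (res f u) w @ Om (res f (u @ w)) w'"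
proof -
  have "Lf f (u @ (w @ w')) = Lf f u @ Om (res f u) (w @ w')" using Lf_append[OF assms] .
  moreover have "Lf f ((u @ w) @ w') = Lf f (u @ w) @ Om (res f (u @ w)) w'" using Lf_append[of f "u @ w" w'] assms by simp
  moreover have "Lf f (u @ w) = Lf f u @ Om (res f u) w" using Lf_append[of f u w] Pref_prefix[of f "u @ w" w'] assms by simp
  ultimately show ?thesis by simp
qed

lemma crun:
  "Pref f u \<Longrightarrow> is_run (can_aut f enc) (enc (res f u)) ts q \<Longrightarrow>
    Pref f (u @ run_label ts) \<and> q = enc (res f (u @ run_label ts)) \<and> Outp (can f enc) ts = Om (res f u) (run_label ts)"
proof (induction ts arbitrary: u)
  case Nil
  then show ?case using Om_Nil_res[of f u] by (auto simp: is_run_Nil_iff Outp_def)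
next
  case (Cons t ts)
  from Cons.prems(2) obtain a q1 where t: "t = (enc (res f u), a, q1)" "t \<in> trans (can_aut f enc)" "is_run (can_aut f enc) q1 ts q"
    by (auto simp: is_run_Cons_iff)
  then obtain u' where u': "enc (res f u) = enc (res f u')" "q1 = enc (res f (u' @ [a]))" "Pref f (u' @ [a])"
    by (auto simp: can_aut_def)
  have "res f u = res f u'" using enc_eq Cons.prems(1) Pref_prefix u' by metis
  then have r: "res f (u @ [a]) = res f (u' @ [a])" by (rule res_snoc_eq)
  then have pa: "Pref f (u @ [a])" using u'(3) Pref_res by metis
  have IH: "Pref f ((u @ [a]) @ run_label ts) \<and> q = enc (res f ((u @ [a]) @ run_label ts)) \<and> Outp (can f enc) ts = Om (res f (u @ [a])) (run_label ts)"
    using Cons.IH[OF pa] t(3) u'(2) r by simp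
  have o1: "out (can f enc) t = Om (res f u) [a]" using out_val[OF pa] t(1) by simp
  have "Om (res f u) ([a] @ run_label ts) = Om (res f u) [a] @ Om (res f (u @ [a])) (run_label ts)"
    using Om_append[of u "[a]" "run_label ts"] IH by simp
  then show ?case using IH o1 t(1) by (simp add: Outp_def)
qed

lemma crun_exists:
  "Pref f (u @ w) \<Longrightarrow> \<exists>ts. is_run (can_aut f enc) (enc (res f u)) ts (enc (res f (u @ w))) \<and> run_label ts = w"
proof (induction w arbitrary: u)
  case Nil then show ?case by (auto intro: is_run.intros)
next
  case (Cons a w)
  have pa: "Pref f ((u @ [a]) @ w)" using Cons.prems by simp
  from Cons.IH[OF pa] obtain ts where ts: "is_run (can_aut f enc) (enc (res f (u @ [a]))) ts (enc (res f (u @ [a] @ w)))" "run_label ts = w"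
    by auto
  have "Pref f (u @ [a])" using pa Pref_prefix by blast
  then have "(enc (res f u), a, enc (res f (u @ [a]))) \<in> trans (can_aut f enc)" by (auto simp: can_aut_def)
  with ts show ?case by (auto intro!: exI[of _ "(enc (res f u), a, enc (res f (u @ [a]))) # ts"] intro: is_run.intros)
qed

lemma can_realizes: "realizes (can f enc) f"
  unfolding realizes_def
proof (intro allI iffI)
  fix w y assume "(w, y) \<in> realized_rel (can f enc)"
  then obtain q0 ts qn where A: "q0 \<in> init (can_aut f enc)" "qn \<in> final (can_aut f enc)" "is_run (can_aut f enc) q0 ts qn"
    "run_label ts = w" "y = iout (can f enc) q0 @ Outp (can f enc) ts @ tout (can f enc) qn"
    unfolding realized_rel_iff by (auto simp: can_def)
  have p0: "Pref f []" "q0 = enc (res f [])" using A(1) by (auto simp: can_aut_def split: if_splits)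
  from crun[OF p0(1)] A(3,4) p0(2) have C: "Pref f w" "qn = enc (res f w)" "Outp (can f enc) ts = Om (res f []) w" by auto
  from A(2) obtain u' where u': "qn = enc (res f u')" "Pref f u'" "f u' \<noteq> None" by (auto simp: can_aut_def)
  have "res f u' = res f w" using enc_eq u' C by metis
  moreover have "res f u' [] \<noteq> None" using F1[of f u' "[]"] u'(3) by auto
  ultimately obtain ot where ot: "res f w [] = Some ot" by auto
  have "tout (can f enc) qn = ot" using tout_val[OF C(1) ot] C(2) by simp
  moreover have "Lf f w = Lf f [] @ Om (res f []) w" using Lf_append[of f "[]" w] C(1) by simp
  moreover have "f w = Some (Lf f w @ ot)" using F1[of f w "[]"] ot by simp
  ultimately show "f w = Some y" using A(5) C(3) by (simp add: can_def)
next
  fix w y assume fw: "f w = Some y"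
  then have pw: "Pref f ([] @ w)" "Pref f []" by (auto simp: Pref_def intro: exI[of _ "[]"])
  obtain ts where ts: "is_run (can_aut f enc) (enc (res f [])) ts (enc (res f w))" "run_label ts = w"
    using crun_exists[OF pw(1)] by auto
  obtain ot where ot: "res f w [] = Some ot" "y = Lf f w @ ot" using F1[of f w "[]"] fw by (cases "res f w []") auto
  have fin: "enc (res f w) \<in> final (can_aut f enc)" using pw fw by (auto simp: can_aut_def)
  have ini: "enc (res f []) \<in> init (can_aut f enc)" using pw by (auto simp: can_aut_def)
  have O: "Outp (can f enc) ts = Om (res f []) w" using crun[OF pw(2) ts(1)] ts(2) by simp
  have "Lf f w = Lf f [] @ Om (res f []) w" using Lf_append[of f "[]" w] pw by simp
  moreover have "tout (can f enc) (enc (res f w)) = ot" using tout_val ot pw by simp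
  ultimately have "y = iout (can f enc) (enc (res f [])) @ Outp (can f enc) ts @ tout (can f enc) (enc (res f w))"
    using ot O by (simp add: can_def)
  then show "(w, y) \<in> realized_rel (can f enc)"
    unfolding realized_rel_iff using ts fin ini by (auto simp: can_def)
qed

lemma can_det: "deterministic (aut (can f enc))"
proof -
  have "res f (u @ [a]) = res f (u' @ [a])" if "enc (res f u) = enc (res f u')" "Pref f (u @ [a])" "Pref f (u' @ [a])" for u u' a
    using enc_eq Pref_prefix that res_snoc_eq by metis
  note H = this
  have I: "p = q" if "p \<in> init (can_aut f enc)" "q \<in> init (can_aut f enc)" for p q
    using that by (simp add: can_aut_def split: if_splits)
  have T: "q = q'" if "(p, a, q) \<in> trans (can_aut f enc)" "(p, a, q') \<in> trans (can_aut f enc)" for p a q q'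
  proof -
    have "\<exists>u. p = enc (res f u) \<and> q = enc (res f (u @ [a])) \<and> Pref f (u @ [a])"
      using that(1) unfolding can_aut_def by simp
    then obtain u where u: "p = enc (res f u)" "q = enc (res f (u @ [a]))" "Pref f (u @ [a])" by blast
    have "\<exists>u'. p = enc (res f u') \<and> q' = enc (res f (u' @ [a])) \<and> Pref f (u' @ [a])"
      using that(2) unfolding can_aut_def by simp
    then obtain u' where u': "p = enc (res f u')" "q' = enc (res f (u' @ [a]))" "Pref f (u' @ [a])" by blast
    show ?thesis using H[of u u' a] u u' by simp
  qed
  show ?thesis unfolding deterministic_def can_def using I T by simp
qed

lemma can_wf: "finite (Res f) \<Longrightarrow> wf_aut (aut (can f enc))"
proof -
  assume fin: "finite (Res f)"
  have R: "Pref f u \<Longrightarrow> enc (res f u) \<in> enc ` Res f" for u by (auto simp: Res_def)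
  have "trans (can_aut f enc) \<subseteq> states (can_aut f enc) \<times> UNIV \<times> states (can_aut f enc)"
  proof
    fix t assume "t \<in> trans (can_aut f enc)"
    then obtain u a where "t = (enc (res f u), a, enc (res f (u @ [a])))" "Pref f (u @ [a])"
      by (auto simp: can_aut_def)
    then show "t \<in> states (can_aut f enc) \<times> UNIV \<times> states (can_aut f enc)"
      using R[of u] R[of "u @ [a]"] Pref_prefix[of f u "[a]"] by (simp add: can_aut_def)
  qed
  moreover have "init (can_aut f enc) \<subseteq> states (can_aut f enc)" using R by (auto simp: can_aut_def)
  moreover have "final (can_aut f enc) \<subseteq> states (can_aut f enc)" using R by (auto simp: can_aut_def)
  moreover have "finite (states (can_aut f enc))" using fin by (simp add: can_aut_def)
  ultimately show ?thesis by (simp add: wf_aut_def can_def)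
qed

lemma can_aperiodic:
  assumes "\<And>x z. res f (x @ wpow z K) = res f (x @ wpow z (Suc K))"
  shows "aperiodic_aut (aut (can f enc))"
  unfolding aperiodic_aut_def aperiodic_rel_def
proof (intro exI allI)
  fix z
  show "trans_cong (aut (can f enc)) (wpow z K) (wpow z (Suc K))"
    unfolding trans_cong_def
  proof (intro ballI)
    fix p q assume "p \<in> states (aut (can f enc))"
    then obtain x where x: "Pref f x" "p = enc (res f x)" by (auto simp: can_def can_aut_def Res_def)
    have key: "(\<exists>ts. is_run (can_aut f enc) p ts q \<and> run_label ts = w) \<longleftrightarrow> Pref f (x @ w) \<and> q = enc (res f (x @ w))" for w
      using crun[OF x(1)] crun_exists x(2) by metis
    have "Pref f (x @ wpow z K) \<longleftrightarrow> Pref f (x @ wpow z (Suc K))" using assms[of x z] Pref_res by metis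
    then show "(\<exists>ts. is_run (aut (can f enc)) p ts q \<and> run_label ts = wpow z K) \<longleftrightarrow>
               (\<exists>ts. is_run (aut (can f enc)) p ts q \<and> run_label ts = wpow z (Suc K))"
      using key[of "wpow z K"] key[of "wpow z (Suc K)"] assms[of x z] by (simp add: can_def)
  qed
qed

end


lemma wpow_Suc': "wpow z (Suc j) = wpow z j @ z"
  by (simp add: wpow_def replicate_append_same[symmetric])

lemma wpow_add: "wpow z (a + b) = wpow z a @ wpow z b"
  by (simp add: wpow_def replicate_add)

lemma wpow_mult: "wpow z (a * b) = wpow (wpow z a) b"
  by (induction b) (simp_all add: wpow_def replicate_add)

lemma wpow_0[simp]: "wpow z 0 = []" by (simp add: wpow_def)
lemma length_wpow[simp]: "length (wpow z n) = n * length z"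
  by (induction n) (simp_all add: wpow_def)

lemma ev_periodic:
  fixes h :: "nat \<Rightarrow> 'b"
  assumes fin: "finite RS" and mem: "\<And>j. h j \<in> RS" and st: "\<And>j. h (Suc j) = F (h j)"
  shows "\<exists>a p. 0 < p \<and> a + p \<le> card RS \<and> (\<forall>j\<ge>a. h (j + p) = h j)"
proof -
  have "card (h ` {0..card RS}) \<le> card RS" using mem fin by (intro card_mono) auto
  then have "\<not> inj_on h {0..card RS}" using pigeonhole[of h "{0..card RS}"] by simp
  then obtain i j where ij: "i \<in> {0..card RS}" "j \<in> {0..card RS}" "i \<noteq> j" "h i = h j"
    unfolding inj_on_def by blast
  obtain a b where ab: "a < b" "b \<le> card RS" "h a = h b"
  proof (cases "i < j")
    case True then show ?thesis using ij that[of i j] by auto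
  next
    case False then have "j < i" using ij(3) by simp
    then show ?thesis using ij that[of j i] by auto
  qed
  have shift: "h (a + k) = h (b + k)" for k
    by (induction k) (simp_all add: ab st)
  have "h (j + (b - a)) = h j" if "j \<ge> a" for j
  proof -
    have "a + (j - a) = j" "b + (j - a) = j + (b - a)" using that ab by auto
    then show ?thesis using shift[of "j - a"] by metis
  qed
  then show ?thesis using ab by (intro exI[of _ a] exI[of _ "b - a"]) auto
qed

lemma ev_const:
  fixes h :: "nat \<Rightarrow> 'b"
  assumes fin: "finite RS" and mem: "\<And>j. h j \<in> RS" and st: "\<And>j. h (Suc j) = F (h j)"
    and ev: "\<exists>n1. \<forall>j\<ge>n1. h (Suc j) = h j"
  shows "\<forall>j\<ge>card RS. h (Suc j) = h j"
proof -
  obtain a p where ap: "0 < p" "a + p \<le> card RS" "\<And>j. j \<ge> a \<Longrightarrow> h (j + p) = h j"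
    using ev_periodic[of RS h F, OF fin mem st] by blast
  obtain n1 where n1: "\<And>j. j \<ge> n1 \<Longrightarrow> h (Suc j) = h j" using ev by blast
  have c: "h (n1 + k) = h n1" for k
  proof (induction k)
    case (Suc k)
    have "h (Suc (n1 + k)) = h (n1 + k)" by (rule n1) simp
    then show ?case using Suc.IH by simp
  qed simp
  have per: "h (j + p * t) = h j" if "j \<ge> a" for j t
  proof (induction t)
    case (Suc t)
    have "h (j + p * t + p) = h (j + p * t)" by (rule ap(3)) (use that in simp)
    moreover have "j + p * Suc t = j + p * t + p" by simp
    ultimately show ?case using Suc.IH by metis
  qed simp
  show ?thesis
  proof (intro allI impI)
    fix j assume "card RS \<le> j"
    then have ja: "j \<ge> a" "Suc j \<ge> a" using ap by simp_all
    have "n1 \<le> p * n1" using ap(1) by simp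
    then have e1: "j + p * n1 = n1 + (j + p * n1 - n1)" and e2: "Suc j + p * n1 = n1 + (Suc j + p * n1 - n1)" by linarith+
    have "h (j + p * n1) = h n1" by (subst e1) (rule c)
    moreover have "h (Suc j + p * n1) = h n1" by (subst e2) (rule c)
    moreover have "h (j + p * n1) = h j" by (rule per[OF ja(1)])
    moreover have "h (Suc j + p * n1) = h (Suc j)" by (rule per[OF ja(2)])
    ultimately show "h (Suc j) = h j" by simp
  qed
qed

lemma res_mem: "res f u \<in> insert (\<lambda>_. None) (Res f)"
  using Pref_res[of f u] by (auto simp: Res_def)

lemma realizes_functional: "realizes T f \<Longrightarrow> functional T"
  unfolding realizes_def functional_def by (metis option.inject)

theorem assemble:
  fixes f :: "'a::finite list \<Rightarrow> 'a list option"
  assumes seq: "sequential_transduction f"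
    and core: "\<And>T x z. wf_aut (aut T) \<Longrightarrow> aperiodic_aut (aut T) \<Longrightarrow> realizes T f \<Longrightarrow> finite (Res f) \<Longrightarrow>
                 \<exists>n1. \<forall>j\<ge>n1. res f (x @ wpow z (Suc j)) = res f (x @ wpow z j)"
  shows "Ap_sequential f \<longleftrightarrow> Ap_rational f"
proof
  assume "Ap_sequential f" then show "Ap_rational f"
    unfolding Ap_sequential_def Ap_rational_def using realizes_functional by blast
next
  assume "Ap_rational f"
  then obtain T where T: "wf_aut (aut T)" "aperiodic_aut (aut T)" "realizes T f"
    unfolding Ap_rational_def by blast
  have fin: "finite (Res f)" using finite_Res[OF seq] .
  obtain enc :: "('a list \<Rightarrow> 'a list option) \<Rightarrow> nat" where inj: "inj_on enc (Res f)"
    using finite_imp_inj_to_nat_seg[OF fin] by blast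
  let ?RS = "insert (\<lambda>_. None) (Res f)"
  have K: "res f (x @ wpow z (card ?RS)) = res f (x @ wpow z (Suc (card ?RS)))" for x z
  proof -
    have "\<forall>j\<ge>card ?RS. res f (x @ wpow z (Suc j)) = res f (x @ wpow z j)"
    proof (rule ev_const[where F = "\<lambda>g. stp g z"])
      show "finite ?RS" using fin by simp
      show "res f (x @ wpow z j) \<in> ?RS" for j by (rule res_mem)
      show "res f (x @ wpow z (Suc j)) = stp (res f (x @ wpow z j)) z" for j
        by (simp add: wpow_Suc' res_append[symmetric])
      show "\<exists>n1. \<forall>j\<ge>n1. res f (x @ wpow z (Suc j)) = res f (x @ wpow z j)" by (rule core[OF T fin])
    qed
    then show ?thesis by simp
  qed
  show "Ap_sequential f" unfolding Ap_sequential_def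
    using can_wf[OF inj fin] can_det[OF inj] can_realizes[OF inj] can_aperiodic[OF inj K] by blast
qed


definition tgt :: "nat \<Rightarrow> (nat \<times> 'a \<times> nat) list \<Rightarrow> nat" where
  "tgt p ts = (if ts = [] then p else snd (snd (last ts)))"

lemma run_tgt: "is_run A p ts r \<Longrightarrow> r = tgt p ts"
  by (induction rule: is_run.induct) (auto simp: tgt_def)

lemma run_take: "is_run A p ts r \<Longrightarrow> is_run A p (take k ts) (tgt p (take k ts)) \<and> is_run A (tgt p (take k ts)) (drop k ts) r"
  using is_run_append[of A p "take k ts" "drop k ts" r] run_tgt by (metis append_take_drop_id)

lemma run_mid:
  assumes "is_run A p ts r" "k1 \<le> k2"
  shows "is_run A (tgt p (take k1 ts)) (drop k1 (take k2 ts)) (tgt p (take k2 ts))"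
proof -
  have R: "is_run A p (take k2 ts) (tgt p (take k2 ts))" using run_take[OF assms(1)] by blast
  have "take k2 ts = take k1 ts @ drop k1 (take k2 ts)"
    using assms(2) by (metis append_take_drop_id min.absorb1 take_take)
  with R obtain q where q: "is_run A p (take k1 ts) q" "is_run A q (drop k1 (take k2 ts)) (tgt p (take k2 ts))"
    using is_run_append by metis
  have "take k1 (take k2 ts) = take k1 ts" using assms(2) by (simp add: min.absorb1)
  then have "q = tgt p (take k1 ts)" using run_tgt[OF q(1)] by simp
  with q show ?thesis by simp
qed

lemma Rel_states: "wf_aut A \<Longrightarrow> p \<in> states A \<Longrightarrow> Rel A p w q \<Longrightarrow> q \<in> states A"
  unfolding Rel_def using is_run_states by blast

definition RelO where "RelO T p w ot q \<longleftrightarrow> (\<exists>ts. is_run (aut T) p ts q \<and> run_label ts = w \<and> Outp T ts = ot)"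

lemma RelO_append: "RelO T p u o1 q \<Longrightarrow> RelO T q w o2 r \<Longrightarrow> RelO T p (u @ w) (o1 @ o2) r"
  unfolding RelO_def by (metis Outp_append is_run_append run_label_append)

lemma RelO_Nil: "RelO T p [] [] p"
  unfolding RelO_def by (auto intro!: exI[of _ "[]"] is_run.intros simp: Outp_def)

lemma RelO_pow: "RelO T q w E q \<Longrightarrow> RelO T q (wpow w s) (wpow E s) q"
proof (induction s)
  case 0 then show ?case using RelO_Nil by (simp add: wpow_def)
next
  case (Suc s) then show ?case using RelO_append[of T q w E q "wpow w s" "wpow E s" q] by (simp add: wpow_def)
qed

lemma Rel_RelO: "Rel (aut T) p w q \<longleftrightarrow> (\<exists>ot. RelO T p w ot q)"
  unfolding Rel_def RelO_def by blast

lemma Rel_pow: "Rel A q w q \<Longrightarrow> Rel A q (wpow w s) q"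
proof (induction s)
  case 0 then show ?case by (auto simp: Rel_def wpow_def intro!: exI[of _ "[]"] is_run.intros)
next
  case (Suc s) then show ?case using Rel_append[of A q w "wpow w s" q] by (auto simp: wpow_def)
qed

lemma ap_shift:
  assumes wf: "wf_aut A" and tc: "\<And>w. trans_cong A (wpow w N0) (wpow w (Suc N0))"
    and m: "m \<ge> N0" and p: "p \<in> states A" and R: "Rel A p (wpow z m) q"
  shows "Rel A p (wpow z (Suc m)) q"
proof -
  have "wpow z m = wpow z N0 @ wpow z (m - N0)" using m wpow_add[of z N0 "m - N0"] by simp
  with R obtain q' where q': "Rel A p (wpow z N0) q'" "Rel A q' (wpow z (m - N0)) q"
    using Rel_append by metis
  have "q' \<in> states A" using Rel_states[OF wf p q'(1)] .
  then have "Rel A p (wpow z (Suc N0)) q'" using tc[of z] p q'(1) unfolding trans_cong_def Rel_def by blast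
  then have "Rel A p (wpow z (Suc N0) @ wpow z (m - N0)) q" using q'(2) Rel_append by metis
  moreover have "wpow z (Suc N0) @ wpow z (m - N0) = wpow z (Suc m)"
    using m wpow_add[of z "Suc N0" "m - N0"] by simp
  ultimately show ?thesis by simp
qed

lemma Outp_len:
  assumes "is_run (aut T) p ts q" "\<And>t. t \<in> trans (aut T) \<Longrightarrow> length (out T t) \<le> M"
  shows "length (Outp T ts) \<le> M * length ts"
proof -
  have "set ts \<subseteq> trans (aut T)" using is_run_trans[OF assms(1)] .
  then show ?thesis using assms(2)
  proof (induction ts)
    case (Cons t ts)
    then have "length (out T t) \<le> M" "length (Outp T ts) \<le> M * length ts" by auto
    then show ?case by (simp add: Outp_def)
  qed (simp add: Outp_def)
qed

lemma wpow_take_drop: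
  assumes "i \<le> K"
  shows "take (i * length w) (wpow w K) = wpow w i" "drop (i * length w) (wpow w K) = wpow w (K - i)"
proof -
  have "wpow w K = wpow w i @ wpow w (K - i)" using wpow_add[of w i "K - i"] assms by simp
  then show "take (i * length w) (wpow w K) = wpow w i" "drop (i * length w) (wpow w K) = wpow w (K - i)"
    by (metis append_eq_conv_conj length_wpow)+
qed

lemma suffix_of_append_eq:
  assumes "a @ c = l @ g" "length a \<le> length l" shows "suffix g c"
proof -
  have "g = drop (length l) (a @ c)" using assms(1) by (metis append_eq_conv_conj)
  also have "\<dots> = drop (length l - length a) c" using assms(2) by simp
  finally show ?thesis by (simp add: suffix_drop)
qed


lemma comb:
  fixes h :: "nat \<Rightarrow> 'a list \<Rightarrow> 'a list option" and W :: "nat \<Rightarrow> 'a list" and \<kappa> :: "nat \<Rightarrow> int"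
  assumes pp: "0 < p"
    and per: "\<And>j. j \<ge> n \<Longrightarrow> h (j + p) = h j"
    and dom: "\<And>j v. j \<ge> n \<Longrightarrow> h j v = None \<longleftrightarrow> h n v = None"
    and v0: "h n v0 \<noteq> None"
    and lcp0: "\<And>j. j \<ge> n \<Longrightarrow> LCP (ranv (h j)) = []"
    and hz: "\<And>j v. j \<ge> n \<Longrightarrow> h j (z @ v) = map_option ((@) (W j)) (h (Suc j) v)"
    and kap: "\<And>j v g g0. j \<ge> n \<Longrightarrow> h j v = Some g \<Longrightarrow> h n v = Some g0 \<Longrightarrow> int (length g) - int (length g0) = \<kappa> j"
    and suf: "\<And>j j' v g g'. j \<ge> n \<Longrightarrow> j' \<ge> n \<Longrightarrow> h j v = Some g \<Longrightarrow> h j' v = Some g' \<Longrightarrow> length g \<le> length g' \<Longrightarrow> suffix g g'"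
  shows "h (Suc n) = h n"
proof -
  have perm: "h (j + p * t) = h j" if "j \<ge> n" for j t
  proof (induction t)
    case (Suc t)
    have "h (j + p * t + p) = h (j + p * t)" by (rule per) (use that in simp)
    moreover have "j + p * Suc t = j + p * t + p" by simp
    ultimately show ?case using Suc.IH by metis
  qed simp
  have red: "h j = h (n + (j - n) mod p)" if "j \<ge> n" for j
  proof -
    have "j = (n + (j - n) mod p) + p * ((j - n) div p)" using that by simp
    then show ?thesis using perm[of "n + (j - n) mod p" "(j - n) div p"] by simp
  qed
  obtain g0v0 where g0v0: "h n v0 = Some g0v0" using v0 by blast
  have kap_h: "\<kappa> i = \<kappa> i'" if ti: "i \<ge> n" and ti': "i' \<ge> n" and te: "h i = h i'" for i i'
  proof -
    obtain g where g: "h i v0 = Some g" using dom[OF ti, of v0] v0 by auto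
    then have g': "h i' v0 = Some g" using te by simp
    show ?thesis using kap[OF ti g g0v0] kap[OF ti' g' g0v0] by simp
  qed
  define S where "S = (\<lambda>s. \<kappa> (n + s)) ` {..<p}"
  have finS: "finite S" "S \<noteq> {}" using pp by (auto simp: S_def)
  obtain s0 where s0: "s0 < p" "\<kappa> (n + s0) = Min S"
    using Min_in[OF finS] by (auto simp: S_def)
  have minimal: "\<kappa> (n + s0) \<le> \<kappa> j" if "j \<ge> n" for j
  proof -
    have "\<kappa> j = \<kappa> (n + (j - n) mod p)" using kap_h[OF that _ red[OF that]] by simp
    moreover have "\<kappa> (n + (j - n) mod p) \<in> S" using pp by (auto simp: S_def)
    ultimately show ?thesis using s0(2) Min_le[OF finS(1)] by simp
  qed
  have step: "h (Suc i) = h i" if i: "i \<ge> Suc n" and mi: "\<And>j. j \<ge> n \<Longrightarrow> \<kappa> i \<le> \<kappa> j" for i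
  proof -
    define t where "t = i - 1"
    have t: "t \<ge> n" "Suc t = i" using i by (auto simp: t_def)
    define \<delta> where "\<delta> = nat (\<kappa> (Suc i) - \<kappa> i)"
    define Q where "Q = drop (length (W t) - \<delta>) (W t)"
    have HQ: "h (Suc i) v = map_option ((@) Q) (h i v)" for v
    proof (cases "h i v")
      case None
      have "h n v = None" using dom[of i v] None i by simp
      then have "h (Suc i) v = None" using dom[of "Suc i" v] i by simp
      then show ?thesis using None by simp
    next
      case (Some g0)
      have "h n v \<noteq> None" using dom[of i v] i Some by simp
      then have "h (Suc i) v \<noteq> None" using dom[of "Suc i" v] i by simp
      then obtain g1 where g1: "h (Suc i) v = Some g1" by blast
      obtain gn where gn: "h n v = Some gn" using \<open>h n v \<noteq> None\<close> by blast
      have k1: "int (length g1) - int (length gn) = \<kappa> (Suc i)" using kap[of "Suc i" v g1 gn] g1 gn i by simp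
      have k0: "int (length g0) - int (length gn) = \<kappa> i" using kap[of i v g0 gn] Some gn i by simp
      have "\<kappa> i \<le> \<kappa> (Suc i)" using mi i by simp
      then have len: "length g0 \<le> length g1" "length g1 - length g0 = \<delta>" using k1 k0 by (auto simp: \<delta>_def)
      have "suffix g0 g1" using suf[of i "Suc i" v g0 g1] Some g1 len i by simp
      then obtain Qv where Qv: "g1 = Qv @ g0" by (auto simp: suffix_def)
      have lQv: "length Qv = \<delta>" using Qv len by simp
      have hi: "h i (z @ v) = Some (W i @ g1)" using hz[of i v] g1 i by simp
      have ht: "h t (z @ v) = Some (W t @ g0)" using hz[of t v] t Some by simp
      have "h n (z @ v) \<noteq> None" using dom[of i "z @ v"] hi i by simp
      then obtain gz where gz: "h n (z @ v) = Some gz" by blast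
      have "int (length (W i @ g1)) - int (length gz) = \<kappa> i" using kap[of i "z @ v" "W i @ g1" gz] hi gz i by linarith
      moreover have "int (length (W t @ g0)) - int (length gz) = \<kappa> t" using kap[of t "z @ v" "W t @ g0" gz] ht gz t by linarith
      moreover have "\<kappa> i \<le> \<kappa> t" using mi t by simp
      ultimately have "length (W i @ g1) \<le> length (W t @ g0)" by simp
      then have "suffix (W i @ g1) (W t @ g0)" using suf[of i t "z @ v"] hi ht i t by simp
      then have "suffix ((W i @ Qv) @ g0) (W t @ g0)" using Qv by simp
      then have "suffix (W i @ Qv) (W t)" by (simp only: same_suffix_suffix)
      then have "suffix Qv (W t)" using suffix_appendD by blast
      then obtain pre where "W t = pre @ Qv" by (auto simp: suffix_def)
      then have "Qv = Q" unfolding Q_def using lQv by simp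
      then show ?thesis using g1 Some Qv by simp
    qed
    have ne: "ranv (h i) \<noteq> {}" using dom[of i v0] v0 i by (auto simp: ranv_def)
    have "ranv (h (Suc i)) = (@) Q ` ranv (h i)" using HQ by (auto simp: ranv_def)
    then have "LCP (ranv (h (Suc i))) = Q @ LCP (ranv (h i))" using LCP_append_image[OF ne] by simp
    then have "Q = []" using lcp0[of i] lcp0[of "Suc i"] i by simp
    show ?thesis
    proof
      fix v show "h (Suc i) v = h i v" using HQ[of v] \<open>Q = []\<close> by (cases "h i v") auto
    qed
  qed
  define js where "js = n + s0 + p"
  have hjs: "h js = h (n + s0)" using per[of "n + s0"] unfolding js_def by simp
  have ind: "h (js + k) = h js" for k
  proof (induction k)
    case (Suc k)
    have e: "\<kappa> (js + k) = \<kappa> (n + s0)" using kap_h[of "js + k" "n + s0"] Suc.IH hjs by (simp add: js_def)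
    have mi: "\<kappa> (js + k) \<le> \<kappa> j" if "j \<ge> n" for j using minimal[OF that] e by simp
    have "js + k \<ge> Suc n" using pp by (simp add: js_def)
    then have "h (Suc (js + k)) = h (js + k)" by (rule step[OF _ mi])
    then show ?case using Suc.IH by simp
  qed simp
  have e1: "n + p * 2 = js + (p - s0)" and e2: "Suc n + p * 2 = js + Suc (p - s0)" using s0 by (auto simp: js_def)
  have "h n = h (n + p * 2)" using perm[of n 2] by simp
  also have "\<dots> = h js" unfolding e1 by (rule ind)
  also have "\<dots> = h (js + Suc (p - s0))" by (rule ind[symmetric])
  also have "\<dots> = h (Suc n + p * 2)" unfolding e2 ..
  also have "\<dots> = h (Suc n)" using perm[of "Suc n" 2] by simp
  finally show ?thesis by simp
qed


lemma wpow_app: "wpow z a @ wpow z b = wpow z (a + b)" "wpow z a @ wpow z b @ u = wpow z (a + b) @ u"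
  by (simp_all add: wpow_add)

locale cc =
  fixes f :: "'a::finite list \<Rightarrow> 'a list option" and T :: "'a transducer" and x z :: "'a list"
  assumes wfT: "wf_aut (aut T)" and apT: "aperiodic_aut (aut T)" and rz: "realizes T f" and fin: "finite (Res f)"
begin

definition "hs j = res f (x @ wpow z j)"
definition "Ls j = Lf f (x @ wpow z j)"
definition "maxI = Max (insert 0 (length ` iout T ` init (aut T)))"
definition "maxO = Max (insert 0 (length ` out T ` trans (aut T)))"
definition "Ab b p = maxI + maxO * (length x + (b + card (states (aut T)) * p) * length z)"

lemma hs_Suc: "hs (Suc j) = stp (hs j) z"
  using res_append[of f "x @ wpow z j" z] by (simp add: hs_def wpow_Suc')

lemma F1h: "f (x @ wpow z j @ v) = map_option ((@) (Ls j)) (hs j v)"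
  using F1[of f "x @ wpow z j" v] by (simp add: hs_def Ls_def)

lemma hsz: "hs j (z @ v) = map_option ((@) (Om (hs j) z)) (hs (Suc j) v)"
  using stp_split[of "hs j" z v] hs_Suc by simp

lemma Pref_hs: "Pref f (x @ wpow z j) \<longleftrightarrow> (\<exists>v. hs j v \<noteq> None)"
  using Pref_res[of f "x @ wpow z j"] by (auto simp: hs_def fun_eq_iff)

lemma Ls_Suc: "Pref f (x @ wpow z (Suc j)) \<Longrightarrow> Ls (Suc j) = Ls j @ Om (hs j) z"
  using Lf_append[of f "x @ wpow z j" z] by (simp add: Ls_def hs_def wpow_Suc')

lemma lcp_hs: "Pref f (x @ wpow z j) \<Longrightarrow> LCP (ranv (hs j)) = []"
  using Om_Nil_res[of f "x @ wpow z j"] by (simp add: Om_def hs_def)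

lemma hs_periodic: "\<exists>n0 p. 0 < p \<and> (\<forall>j\<ge>n0. hs (j + p) = hs j)"
proof -
  have "\<exists>a p. 0 < p \<and> a + p \<le> card (insert (\<lambda>_. None) (Res f)) \<and> (\<forall>j\<ge>a. hs (j + p) = hs j)"
    by (rule ev_periodic[where F = "\<lambda>g. stp g z"]) (use fin res_mem hs_Suc in \<open>auto simp: hs_def\<close>)
  then show ?thesis by blast
qed

lemma finite_trans: "finite (trans (aut T))"
proof -
  have "finite (states (aut T) \<times> (UNIV :: 'a set) \<times> states (aut T))" using wfT by (simp add: wf_aut_def)
  moreover have "trans (aut T) \<subseteq> states (aut T) \<times> (UNIV :: 'a set) \<times> states (aut T)" using wfT by (simp add: wf_aut_def)
  ultimately show ?thesis using finite_subset by blast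
qed

lemma maxO_ge: "t \<in> trans (aut T) \<Longrightarrow> length (out T t) \<le> maxO"
  unfolding maxO_def using finite_trans by (intro Max_ge) auto

lemma maxI_ge: "q \<in> init (aut T) \<Longrightarrow> length (iout T q) \<le> maxI"
proof -
  have "finite (init (aut T))" using wfT finite_subset by (auto simp: wf_aut_def)
  then show "q \<in> init (aut T) \<Longrightarrow> length (iout T q) \<le> maxI" unfolding maxI_def by (intro Max_ge) auto
qed

lemma per_t: "(\<And>j. j \<ge> n0 \<Longrightarrow> hs (j + p) = hs j) \<Longrightarrow> j \<ge> n0 \<Longrightarrow> hs (j + p * t) = hs j"
proof (induction t)
  case (Suc t)
  have "hs (j + p * t + p) = hs (j + p * t)" using Suc.prems by simp
  moreover have "j + p * Suc t = j + p * t + p" by simp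
  ultimately show ?case using Suc by metis
qed simp

lemma D1:
  assumes pp: "0 < p" and per: "\<And>j. j \<ge> n0 \<Longrightarrow> hs (j + p) = hs j"
    and tc: "\<And>w. trans_cong (aut T) (wpow w N0) (wpow w (Suc N0))"
    and b: "b \<ge> n0" and vb: "hs b v \<noteq> None" and c: "c \<ge> card (states (aut T))"
  shows "\<exists>A E C r. length A \<le> Ab b p \<and> (\<forall>s. f (x @ wpow z (b + c * p + s * (1 + p * r)) @ v) = Some (A @ wpow E s @ C))"
proof -
  define K where "K = card (states (aut T))"
  define W where "W = wpow z p"
  obtain c2 where c2: "c = K + c2" using c by (metis K_def le_add_diff_inverse)
  have "hs (b + p * c) = hs b" using per_t[OF per b] .
  then have "hs (b + c * p) v \<noteq> None" using vb by (simp add: mult.commute)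
  then obtain y where "f (x @ wpow z (b + c * p) @ v) = Some y" using F1h by fastforce
  then have "(x @ wpow z (b + c * p) @ v, y) \<in> realized_rel T" using rz by (simp add: realizes_def)
  then obtain q0 ts qf where R: "q0 \<in> init (aut T)" "qf \<in> final (aut T)" "is_run (aut T) q0 ts qf"
    "run_label ts = x @ wpow z (b + c * p) @ v"
    unfolding realized_rel_iff by blast
  have lab: "x @ wpow z (b + c * p) @ v = (x @ wpow z b) @ (wpow W K @ (wpow z (c2 * p) @ v))"
    by (simp add: W_def wpow_mult[symmetric] wpow_app c2 algebra_simps)
  obtain ts1 ts' qa where S1: "ts = ts1 @ ts'" "run_label ts1 = x @ wpow z b"
    "run_label ts' = wpow W K @ (wpow z (c2 * p) @ v)" "is_run (aut T) q0 ts1 qa" "is_run (aut T) qa ts' qf"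
    using is_run_split_label[OF R(3)] R(4) lab by metis
  obtain ts2 ts3 qb where S2: "ts' = ts2 @ ts3" "run_label ts2 = wpow W K"
    "run_label ts3 = wpow z (c2 * p) @ v" "is_run (aut T) qa ts2 qb" "is_run (aut T) qb ts3 qf"
    using is_run_split_label[OF S1(5) S1(3)] by blast
  have q0s: "q0 \<in> states (aut T)" using R(1) wfT by (auto simp: wf_aut_def)
  have qas: "qa \<in> states (aut T)" using is_run_states[OF wfT S1(4) q0s] .
  define st where "st k = tgt qa (take k ts2)" for k
  have st_states: "st k \<in> states (aut T)" for k
    using run_take[OF S2(4), of k] is_run_states[OF wfT _ qas] by (auto simp: st_def)
  define g where "g i = st (i * length W)" for i
  have "card (g ` {0..K}) \<le> K" unfolding K_def using st_states wfT
    by (intro card_mono) (auto simp: wf_aut_def g_def)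
  then have "\<not> inj_on g {0..K}" using pigeonhole[of g "{0..K}"] by simp
  then obtain i0 j0 where ij0: "i0 \<in> {0..K}" "j0 \<in> {0..K}" "i0 \<noteq> j0" "g i0 = g j0"
    unfolding inj_on_def by blast
  obtain i j where ij: "i < j" "j \<le> K" "g i = g j"
  proof (cases "i0 < j0")
    case True then show ?thesis using ij0 that[of i0 j0] by auto
  next
    case False then have "j0 < i0" using ij0(3) by simp
    then show ?thesis using ij0 that[of j0 i0] by auto
  qed
  define q where "q = g i"
  have qs: "q \<in> states (aut T)" using st_states by (simp add: q_def g_def)
  have ik: "i \<le> K" using ij by simp
  have pre_run: "is_run (aut T) q0 (ts1 @ take (i * length W) ts2) q"
    using S1(4) run_take[OF S2(4), of "i * length W"] is_run_append
    by (metis q_def g_def st_def)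
  have pre_lab: "run_label (ts1 @ take (i * length W) ts2) = x @ wpow z b @ wpow W i"
    using S1(2) S2(2) wpow_take_drop(1)[OF ik] by (simp add: run_label_take)
  have loop_run: "is_run (aut T) q (drop (i * length W) (take (j * length W) ts2)) q"
    using run_mid[OF S2(4), of "i * length W" "j * length W"] ij
    by (simp add: q_def g_def st_def)
  have loop_lab: "run_label (drop (i * length W) (take (j * length W) ts2)) = wpow W (j - i)"
  proof -
    have "take (j * length W) (wpow W K) = wpow W j" using wpow_take_drop(1)[of j K W] ij by simp
    moreover have "drop (i * length W) (wpow W j) = wpow W (j - i)" using wpow_take_drop(2)[of i j W] ij by simp
    ultimately show ?thesis using S2(2) by (simp add: run_label_take run_label_drop)
  qed
  have rest_run: "is_run (aut T) q (drop (i * length W) ts2 @ ts3) qf"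
    using run_take[OF S2(4), of "i * length W"] S2(5) is_run_append
    by (metis q_def g_def st_def)
  have rest_lab: "run_label (drop (i * length W) ts2 @ ts3) = wpow W (K - i) @ wpow z (c2 * p) @ v"
    using S2(2,3) wpow_take_drop(2)[OF ik] by (simp add: run_label_drop)
  define d where "d = p * (j - i)"
  have d1: "d \<ge> 1" using pp ij by (simp add: d_def)
  have "Rel (aut T) q (wpow z d) q" using loop_run loop_lab
    by (auto simp: Rel_def d_def W_def wpow_mult)
  then have "Rel (aut T) q (wpow (wpow z d) N0) q" by (rule Rel_pow)
  then have "Rel (aut T) q (wpow z (d * N0)) q" by (simp add: wpow_mult)
  moreover have "d * N0 \<ge> N0" using d1 by simp
  ultimately have "Rel (aut T) q (wpow z (Suc (d * N0))) q"
    using ap_shift[OF wfT tc _ qs] by blast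
  then obtain E where E: "RelO T q (wpow z (Suc (d * N0))) E q" using Rel_RelO by metis
  define r where "r = (j - i) * N0"
  have e: "Suc (d * N0) = 1 + p * r" by (simp add: d_def r_def)
  define A where "A = iout T q0 @ Outp T (ts1 @ take (i * length W) ts2)"
  define C where "C = Outp T (drop (i * length W) ts2 @ ts3) @ tout T qf"
  have preO: "RelO T q0 (x @ wpow z b @ wpow W i) (Outp T (ts1 @ take (i * length W) ts2)) q"
    using pre_run pre_lab by (auto simp: RelO_def)
  have restO: "RelO T q (wpow W (K - i) @ wpow z (c2 * p) @ v) (Outp T (drop (i * length W) ts2 @ ts3)) qf"
    using rest_run rest_lab by (auto simp: RelO_def)
  have main: "f (x @ wpow z (b + c * p + s * (1 + p * r)) @ v) = Some (A @ wpow E s @ C)" for s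
  proof -
    have "RelO T q (wpow (wpow z (1 + p * r)) s) (wpow E s) q" using RelO_pow E e by metis
    then have "RelO T q0 ((x @ wpow z b @ wpow W i) @ wpow (wpow z (1 + p * r)) s @ (wpow W (K - i) @ wpow z (c2 * p) @ v))
       (Outp T (ts1 @ take (i * length W) ts2) @ wpow E s @ Outp T (drop (i * length W) ts2 @ ts3)) qf"
      using RelO_append preO restO by blast
    moreover have "(x @ wpow z b @ wpow W i) @ wpow (wpow z (1 + p * r)) s @ (wpow W (K - i) @ wpow z (c2 * p) @ v)
        = x @ wpow z (b + c * p + s * (1 + p * r)) @ v"
    proof -
      obtain k1 where k1: "K = i + k1" using ik le_Suc_ex by blast
      then have ki: "K - i = k1" by simp
      have wl: "(x @ wpow z b @ wpow W i) @ wpow (wpow z (1 + p * r)) s @ (wpow W k1 @ wpow z (c2 * p) @ v)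
         = x @ wpow z (b + p * i + (1 + p * r) * s + p * k1 + c2 * p) @ v"
        by (simp only: W_def wpow_mult[symmetric] append.assoc wpow_app add.assoc)
      have ar: "b + p * i + (1 + p * r) * s + p * k1 + c2 * p = b + c * p + s * (1 + p * r)"
        unfolding c2 k1 by (simp add: algebra_simps)
      show ?thesis unfolding ki wl ar by (rule refl)
    qed
    ultimately obtain tsf where "is_run (aut T) q0 tsf qf" "run_label tsf = x @ wpow z (b + c * p + s * (1 + p * r)) @ v"
      "Outp T tsf = Outp T (ts1 @ take (i * length W) ts2) @ wpow E s @ Outp T (drop (i * length W) ts2 @ ts3)"
      unfolding RelO_def by auto
    then have "(x @ wpow z (b + c * p + s * (1 + p * r)) @ v, A @ wpow E s @ C) \<in> realized_rel T"
      unfolding realized_rel_iff A_def C_def using R(1,2) by fastforce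
    then show ?thesis using rz by (simp add: realizes_def)
  qed
  have "length A \<le> Ab b p"
  proof -
    let ?P = "ts1 @ take (i * length W) ts2"
    have L1: "length (Outp T ?P) \<le> maxO * length ?P"
      using Outp_len[OF pre_run maxO_ge] .
    have "length (run_label ?P) = length x + b * length z + i * (p * length z)"
      unfolding pre_lab by (simp add: W_def)
    then have L2: "length ?P = length x + (b + p * i) * length z" by (simp add: add_mult_distrib)
    have "b + p * i \<le> b + K * p" using ik by (simp add: mult.commute)
    then have "(b + p * i) * length z \<le> (b + K * p) * length z" by (rule mult_le_mono1)
    then have "length ?P \<le> length x + (b + K * p) * length z" unfolding L2 by simp
    then have "maxO * length ?P \<le> maxO * (length x + (b + K * p) * length z)" by (rule mult_le_mono2)
    with L1 have L3: "length (Outp T ?P) \<le> maxO * (length x + (b + K * p) * length z)" by (rule order_trans)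
    have "length A = length (iout T q0) + length (Outp T ?P)" by (simp add: A_def)
    also have "\<dots> \<le> maxI + maxO * (length x + (b + K * p) * length z)"
      using maxI_ge[OF R(1)] L3 by (rule add_le_mono)
    finally show ?thesis by (simp add: Ab_def K_def)
  qed
  then show ?thesis using main by blast
qed

end


context cc
begin

lemma core_n:
  assumes pp: "0 < p" and per: "\<And>j. j \<ge> n0 \<Longrightarrow> hs (j + p) = hs j"
    and tc: "\<And>w. trans_cong (aut T) (wpow w N0) (wpow w (Suc N0))"
    and n: "n \<ge> n0"
  shows "hs (Suc n) = hs n"
proof (cases "\<forall>v. hs n v = None")
  case True
  then have "hs n = (\<lambda>_. None)" by auto
  then show ?thesis using hs_Suc[of n] by (simp add: stp_def)
next
  case False
  then obtain v0 where v0: "hs n v0 \<noteq> None" by auto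
  define K where "K = card (states (aut T))"
  have pt: "hs (j + p * t) = hs j" if "j \<ge> n0" for j t using per_t[OF per that] .
  have dom_up: "hs (b + s) v \<noteq> None" if b: "b \<ge> n0" and bv: "hs b v \<noteq> None" for b s v
  proof -
    obtain A E C r where AEC: "\<forall>s. f (x @ wpow z (b + K * p + s * (1 + p * r)) @ v) = Some (A @ wpow E s @ C)"
      using D1[OF pp per tc b bv, of K] by (auto simp: K_def)
    then have "hs (b + K * p + s * (1 + p * r)) v \<noteq> None"
      using F1h[of "b + K * p + s * (1 + p * r)" v] by (cases "hs (b + K * p + s * (1 + p * r)) v") auto
    moreover have "b + K * p + s * (1 + p * r) = (b + s) + p * (K + s * r)" by (simp add: algebra_simps)
    moreover have "hs ((b + s) + p * (K + s * r)) = hs (b + s)" using pt[of "b + s"] b by simp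
    ultimately show ?thesis by metis
  qed
  have dom: "hs j v = None \<longleftrightarrow> hs n v = None" if jn: "j \<ge> n" for j v
  proof
    assume a: "hs j v = None"
    show "hs n v = None"
    proof (rule ccontr)
      assume "hs n v \<noteq> None" then have "hs (n + (j - n)) v \<noteq> None" using dom_up n by blast
      with a jn show False by simp
    qed
  next
    assume a: "hs n v = None"
    show "hs j v = None"
    proof (rule ccontr)
      assume b: "hs j v \<noteq> None"
      have "hs (j + (p * (j - n) - (j - n))) v \<noteq> None" using dom_up[of j v] b jn n by simp
      moreover have "j + (p * (j - n) - (j - n)) = n + p * (j - n)"
      proof -
        obtain k where k: "j = n + k" using jn le_Suc_ex by blast
        have "k \<le> p * k" using pp by simp
        then show ?thesis using k by simp
      qed
      moreover have "hs (n + p * (j - n)) = hs n" using pt n by blast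
      ultimately show False using a by metis
    qed
  qed
  have pref: "Pref f (x @ wpow z j)" if "j \<ge> n" for j using Pref_hs dom[OF that, of v0] v0 by blast
  define ls where "ls j = length (Ls j)" for j
  have LsS: "Ls (Suc j) = Ls j @ Om (hs j) z" if "j \<ge> n" for j using Ls_Suc pref[of "Suc j"] that by simp
  have lsS: "ls (Suc j) = ls j + length (Om (hs j) z)" if "j \<ge> n" for j using LsS[OF that] by (simp add: ls_def)
  have Lpre: "\<exists>w. Ls (j + k) = Ls j @ w" if "j \<ge> n" for j k
  proof (induction k)
    case 0 then show ?case by simp
  next
    case (Suc k)
    then obtain w where "Ls (j + k) = Ls j @ w" by blast
    then show ?case using LsS[of "j + k"] that by auto
  qed
  have ls_mono: "ls j \<le> ls (j + k)" if "j \<ge> n" for j k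
    using Lpre[OF that, of k] by (auto simp: ls_def)
  define cyc where "cyc = ls (n + p) - ls n"
  have ls_per0: "ls (n + k + p) = ls (n + k) + cyc" for k
  proof (induction k)
    case 0 then show ?case using ls_mono[of n p] by (simp add: cyc_def)
  next
    case (Suc k)
    have "ls (n + Suc k + p) = ls (n + k + p) + length (Om (hs (n + k + p)) z)"
      using lsS[of "n + k + p"] by simp
    also have "hs (n + k + p) = hs (n + k)" using per n by simp
    finally show ?case using Suc.IH lsS[of "n + k"] by simp
  qed
  have ls_per: "ls (j + p) = ls j + cyc" if "j \<ge> n" for j
    using ls_per0[of "j - n"] that by simp
  have ls_pt: "ls (j + p * t) = ls j + t * cyc" if "j \<ge> n" for j t
  proof (induction t)
    case (Suc t)
    have "ls (j + p * t + p) = ls (j + p * t) + cyc" using ls_per[of "j + p * t"] that by simp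
    moreover have "j + p * Suc t = j + p * t + p" by simp
    ultimately show ?case using Suc.IH by (metis add.assoc add.commute mult_Suc)
  qed simp
  have MT: "(\<exists>C'. \<forall>s<p. \<exists>g. hs (n + s) v = Some g \<and> suffix g C') \<and>
            (\<forall>s g g0. hs (n + s) v = Some g \<longrightarrow> hs n v = Some g0 \<longrightarrow>
               int p * (int (length g) - int (length g0)) = int s * int cyc - int p * (int (ls (n + s)) - int (ls n)))"
    if vn: "hs n v \<noteq> None" for v
  proof -
    define c where "c = K + Ab n p + cyc"
    obtain A E C r where AEC: "length A \<le> Ab n p"
      "\<And>s. f (x @ wpow z (n + c * p + s * (1 + p * r)) @ v) = Some (A @ wpow E s @ C)"
      using D1[OF pp per tc n vn, of c] by (auto simp: c_def K_def)
    define m where "m = n + c * p"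
    have idx: "m + s * (1 + p * r) = (n + s) + p * (c + s * r)" for s by (simp add: m_def algebra_simps)
    have hsidx: "hs (m + s * (1 + p * r)) = hs (n + s)" for s
    proof -
      have "n + s \<ge> n0" using n by simp
      then show ?thesis using idx[of s] pt[of "n + s" "c + s * r"] by metis
    qed
    define G where "G s = the (hs (n + s) v)" for s
    have hG: "hs (n + s) v = Some (G s)" for s using dom[of "n + s" v] vn by (auto simp: G_def)
    have Eq: "A @ wpow E s @ C = Ls (m + s * (1 + p * r)) @ G s" for s
      using AEC(2)[of s] F1h[of "m + s * (1 + p * r)" v] hsidx[of s] hG[of s] by (simp add: m_def)
    have lsidx: "ls (m + s * (1 + p * r)) = ls (n + s) + (c + s * r) * cyc" for s
    proof -
      have "n \<le> n + s" by simp
      then show ?thesis using idx[of s] ls_pt[of "n + s" "c + s * r"] by metis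
    qed
    have len: "length A + s * length E + length C = ls (n + s) + (c + s * r) * cyc + length (G s)" for s
      using arg_cong[OF Eq[of s], of length] lsidx[of s] by (simp add: ls_def)
    have Gp: "G p = G 0" using per[of n] n by (simp add: G_def)
    have lsp: "ls (n + p) = ls n + cyc" using ls_per[of n] by simp
    have ilen: "int (length A) + int s * int (length E) + int (length C) = int (ls (n + s)) + (int c + int s * int r) * int cyc + int (length (G s))" for s
      using arg_cong[OF len[of s], of int] by simp
    have pE: "int p * int (length E) = int cyc + int p * int r * int cyc"
    proof -
      have "int (length A) + int (length C) = int (ls n) + int c * int cyc + int (length (G 0))"
        using ilen[of 0] by simp
      moreover have "int (length A) + int p * int (length E) + int (length C) = int (ls n) + int cyc + (int c + int p * int r) * int cyc + int (length (G 0))"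
        using ilen[of p] Gp lsp by simp
      ultimately show ?thesis by algebra
    qed
    have MT2: "int p * (int (length (G s)) - int (length (G 0))) = int s * int cyc - int p * (int (ls (n + s)) - int (ls n))" for s
    proof -
      have e0: "int (length A) + int (length C) = int (ls n) + int c * int cyc + int (length (G 0))"
        using ilen[of 0] by simp
      have es: "int (length A) + int s * int (length E) + int (length C) = int (ls (n + s)) + (int c + int s * int r) * int cyc + int (length (G s))"
        using ilen[of s] by simp
      from e0 es pE show ?thesis by algebra
    qed
    have MT1: "\<exists>C'. \<forall>s<p. suffix (G s) C'"
    proof (cases "cyc = 0")
      case True
      then have "int p * int (length E) = 0" using pE by simp
      then have E0: "E = []" using pp by simp
      have lsm: "ls m = ls n" using lsidx[of 0] True by simp
      have LsEq: "Ls (m + s * (1 + p * r)) = Ls m" if sp: "s < p" for s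
      proof -
        have "ls (n + s) \<le> ls (n + s + (p - s))" by (rule ls_mono) simp
        also have "n + s + (p - s) = n + p" using sp by simp
        finally have a1: "ls (n + s) \<le> ls (n + p)" .
        have a2: "ls n \<le> ls (n + s)" using ls_mono[of n s] by simp
        have e: "ls (n + s) = ls n" using a1 a2 lsp True by linarith
        have l: "ls (m + s * (1 + p * r)) = ls m" using lsidx[of s] e lsm True by simp
        have "n \<le> m" by (simp add: m_def)
        then obtain w where w: "Ls (m + s * (1 + p * r)) = Ls m @ w" using Lpre by blast
        then have "length w = 0" using l by (simp add: ls_def)
        then show ?thesis using w by simp
      qed
      have Gs: "G s = G 0" if "s < p" for s
      proof -
        have "A @ C = Ls m @ G s" using Eq[of s] E0 LsEq[OF that] by (simp add: wpow_def)
        moreover have "A @ C = Ls m @ G 0" using Eq[of 0] by (simp add: wpow_def)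
        ultimately show ?thesis by simp
      qed
      show ?thesis
      proof (intro exI[of _ "G 0"] allI impI)
        fix s assume "s < p"
        then have "G s = G 0" by (rule Gs)
        then show "suffix (G s) (G 0)" by simp
      qed
    next
      case False
      then have cyc1: "cyc \<ge> 1" by simp
      have pEn: "p * length E = cyc + p * r * cyc" using pE by (metis of_nat_add of_nat_eq_iff of_nat_mult)
      have "suffix (G s) C" if sp: "s < p" for s
      proof (rule suffix_of_append_eq)
        show "(A @ wpow E s) @ C = Ls (m + s * (1 + p * r)) @ G s" using Eq[of s] by simp
        have i1: "s * cyc \<le> p * cyc" using sp by simp
        have "length A + cyc \<le> c" using AEC(1) by (simp add: c_def)
        then have "p * (length A + cyc) \<le> p * c" by (rule mult_le_mono2)
        then have i2: "p * length A + p * cyc \<le> p * c" by (simp add: add_mult_distrib2)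
        have "c \<le> c * cyc" using cyc1 by simp
        then have i3: "p * c \<le> p * (c * cyc)" by (rule mult_le_mono2)
        have "p * (length A + s * length E) = p * length A + s * (p * length E)" by (simp add: algebra_simps)
        also have "\<dots> = p * length A + s * cyc + s * (p * r * cyc)" using pEn by (simp add: algebra_simps)
        also have "\<dots> \<le> p * ls (n + s) + p * (c * cyc) + s * (p * r * cyc)" using i1 i2 i3 by linarith
        also have "\<dots> = p * (ls (n + s) + (c + s * r) * cyc)" by (simp add: algebra_simps)
        finally have "length A + s * length E \<le> ls (n + s) + (c + s * r) * cyc" using pp by simp
        then show "length (A @ wpow E s) \<le> length (Ls (m + s * (1 + p * r)))"
          using lsidx[of s] by (simp add: ls_def)
      qed
      then show ?thesis by blast
    qed
    show ?thesis
    proof (intro conjI)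
      show "\<exists>C'. \<forall>s<p. \<exists>g. hs (n + s) v = Some g \<and> suffix g C'" using MT1 hG by blast
      show "\<forall>s g g0. hs (n + s) v = Some g \<longrightarrow> hs n v = Some g0 \<longrightarrow>
               int p * (int (length g) - int (length g0)) = int s * int cyc - int p * (int (ls (n + s)) - int (ls n))"
        using MT2 hG[of 0] hG by auto
    qed
  qed
  have red: "hs j = hs (n + (j - n) mod p)" if "j \<ge> n" for j
  proof -
    have "j = (n + (j - n) mod p) + p * ((j - n) div p)" using that by simp
    then show ?thesis using pt[of "n + (j - n) mod p" "(j - n) div p"] n by simp
  qed
  obtain g0v0 where g0v0: "hs n v0 = Some g0v0" using v0 by blast
  define \<kappa> where "\<kappa> j = int (length (the (hs j v0))) - int (length g0v0)" for j
  show ?thesis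
  proof (rule comb[where h = hs and W = "\<lambda>j. Om (hs j) z" and \<kappa> = \<kappa> and p = p])
    show "0 < p" by (rule pp)
    show "\<And>j. n \<le> j \<Longrightarrow> hs (j + p) = hs j" using per n by simp
    show "\<And>j v. n \<le> j \<Longrightarrow> (hs j v = None) = (hs n v = None)" by (rule dom)
    show "hs n v0 \<noteq> None" by (rule v0)
    show "\<And>j. n \<le> j \<Longrightarrow> LCP (ranv (hs j)) = []" using lcp_hs pref by blast
    show "\<And>j v. n \<le> j \<Longrightarrow> hs j (z @ v) = map_option ((@) (Om (hs j) z)) (hs (Suc j) v)" by (rule hsz)
    show "int (length g) - int (length g0) = \<kappa> j" if jn: "n \<le> j" and hj0: "hs j v = Some g" and hn0: "hs n v = Some g0" for j v g g0
    proof -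
      define s where "s = (j - n) mod p"
      have hj: "hs j = hs (n + s)" using red[OF jn] unfolding s_def .
      obtain g' where g': "hs j v0 = Some g'" using dom[OF jn, of v0] v0 by auto
      have vn: "hs n v \<noteq> None" using hn0 by simp
      have hjv: "hs (n + s) v = Some g" using hj0 hj by simp
      have hjv0: "hs (n + s) v0 = Some g'" using g' hj by simp
      have "int p * (int (length g) - int (length g0)) = int s * int cyc - int p * (int (ls (n + s)) - int (ls n))"
        using conjunct2[OF MT[OF vn]] hjv hn0 by blast
      moreover have "int p * (int (length g') - int (length g0v0)) = int s * int cyc - int p * (int (ls (n + s)) - int (ls n))"
        using conjunct2[OF MT[OF v0]] hjv0 g0v0 by blast
      ultimately have "int p * (int (length g) - int (length g0)) = int p * (int (length g') - int (length g0v0))" by simp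
      then have "int (length g) - int (length g0) = int (length g') - int (length g0v0)" using pp by simp
      then show ?thesis using g' by (simp add: \<kappa>_def)
    qed
    show "suffix g g'" if "n \<le> j" "n \<le> j'" "hs j v = Some g" "hs j' v = Some g'" "length g \<le> length g'" for j j' v g g'
    proof -
      have vn: "hs n v \<noteq> None" using dom[OF that(1), of v] that(3) by auto
      obtain C' where C': "\<forall>s<p. \<exists>g. hs (n + s) v = Some g \<and> suffix g C'" using conjunct1[OF MT[OF vn]] by blast
      have s1: "(j - n) mod p < p" "(j' - n) mod p < p" using pp by simp_all
      obtain g1 where g1: "hs (n + (j - n) mod p) v = Some g1" "suffix g1 C'" using C' s1(1) by blast
      obtain g2 where g2: "hs (n + (j' - n) mod p) v = Some g2" "suffix g2 C'" using C' s1(2) by blast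
      have "g1 = g" using g1(1) red[OF that(1)] that(3) by simp
      moreover have "g2 = g'" using g2(1) red[OF that(2)] that(4) by simp
      ultimately have "suffix g C'" "suffix g' C'" using g1 g2 by simp_all
      then show ?thesis using that(5) suffix_length_suffix by blast
    qed
  qed
qed

lemma core: "\<exists>n1. \<forall>j\<ge>n1. hs (Suc j) = hs j"
proof -
  obtain n0 p where np: "0 < p" "\<forall>j\<ge>n0. hs (j + p) = hs j" using hs_periodic by blast
  obtain N0 where N0: "\<And>w. trans_cong (aut T) (wpow w N0) (wpow w (Suc N0))"
    using apT unfolding aperiodic_aut_def aperiodic_rel_def by blast
  show ?thesis using core_n[OF np(1) _ N0] np(2) by blast
qed

end

lemma core_ext:
  fixes f :: "'a::finite list \<Rightarrow> 'a list option"
  assumes "wf_aut (aut T)" "aperiodic_aut (aut T)" "realizes T f" "finite (Res f)"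
  shows "\<exists>n1. \<forall>j\<ge>n1. res f (x @ wpow z (Suc j)) = res f (x @ wpow z j)"
proof -
  interpret cc f T x z using assms by unfold_locales
  show ?thesis using core by (simp add: hs_def)
qed

theorem theorem2p4:
  fixes f :: "'a::finite list \<Rightarrow> 'a list option"
  assumes "sequential_transduction f"
  shows "Ap_sequential f \<longleftrightarrow> Ap_rational f"
  by (rule assemble[OF assms core_ext])


end
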